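(* Let $(\mathcal{A},E,\mathcal{B})$ be an operator-valued $C^*$-probability space and $x_1,x_2,y_1,y_2,w$ self-adjoint elements of $\mathcal{A}$ such that $\mathcal{A}_{\{x_1,x_2\}}\prec\mathcal{A}_w\prec\mathcal{A}_{\{y_1,y_2\}}$ over $\mathcal{B}$. Then for all $n,m\ge0$, $$E\big[(x_1+y_1)^nw(x_2+y_2)^m\big]=\sum_{k=0}^n\sum_{\ell=0}^m\sum_{\substack{q_0,\dots,q_k\ge0\\ q_0+\dots+q_k=n-k}}\sum_{\substack{p_0,\dots,p_\ell\ge0\\ p_0+\dots+p_\ell=m-\ell}}E\Big[E[y_1^{q_0}]x_1E[y_1^{q_1}]\cdots x_1E[y_1^{q_k}]\cdot E[w]\cdot E[y_2^{p_0}]x_2E[y_2^{p_1}]\cdots x_2E[y_2^{p_\ell}]\Big].$$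
   Context: $(\mathcal{A},E,\mathcal{B})$: unital $C^*$-algebra, unital $C^*$-subalgebra $\mathcal{B}$, completely positive conditional expectation $E:\mathcal{A}\to\mathcal{B}$; $y^0$ is interpreted as $1$ (so $E[y^0]=1$). For a set $S\subseteq\mathcal{A}$, $\mathcal{A}_S$ is the (possibly non-unital) $\mathcal{B}$-bimodule subalgebra generated by $S$. Monotone independence $\mathcal{A}_1\prec\mathcal{A}_2\prec\mathcal{A}_3$ over $\mathcal{B}$ means $E[a_1\cdots a_j\cdots a_n]=E[a_1\cdots a_{j-1}E[a_j]a_{j+1}\cdots a_n]$ whenever $a_k\in\mathcal{A}_{i_k}$, $i_k\in\{1,2,3\}$, and $i_{j-1}<i_j>i_{j+1}$ (one inequality dropped at the ends). *)

theory Defs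
  imports "HOL-Analysis.Analysis"
begin

text \<open>A unital complex Banach algebra is modelled as a type of class
real_normed_algebra_1 and banach together with a complex scalar multiplication sc
extending the real one; a unital C*-algebra additionally carries an involution st.\<close>

definition complex_scaling :: "(complex \<Rightarrow> 'a::{real_normed_algebra_1,banach} \<Rightarrow> 'a) \<Rightarrow> bool" where
  "complex_scaling sc \<longleftrightarrow>
     (\<forall>r a. sc (complex_of_real r) a = r *\<^sub>R a) \<and>
     (\<forall>c d a. sc (c + d) a = sc c a + sc d a) \<and>
     (\<forall>c a b. sc c (a + b) = sc c a + sc c b) \<and>
     (\<forall>c d a. sc (c * d) a = sc c (sc d a)) \<and>
     (\<forall>c a b. sc c (a * b) = sc c a * b \<and> sc c (a * b) = a * sc c b) \<and>
     (\<forall>c a. norm (sc c a) = cmod c * norm a)"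

definition unital_cstar_algebra ::
  "(complex \<Rightarrow> 'a::{real_normed_algebra_1,banach} \<Rightarrow> 'a) \<Rightarrow> ('a \<Rightarrow> 'a) \<Rightarrow> bool" where
  "unital_cstar_algebra sc st \<longleftrightarrow>
     complex_scaling sc \<and>
     (\<forall>a b. st (a + b) = st a + st b) \<and>
     (\<forall>c a. st (sc c a) = sc (cnj c) (st a)) \<and>
     (\<forall>a b. st (a * b) = st b * st a) \<and>
     (\<forall>a. st (st a) = a) \<and>
     (\<forall>a. norm (st a * a) = (norm a)\<^sup>2)"

definition unital_cstar_subalgebra ::
  "(complex \<Rightarrow> 'a::{real_normed_algebra_1,banach} \<Rightarrow> 'a) \<Rightarrow> ('a \<Rightarrow> 'a) \<Rightarrow> 'a set \<Rightarrow> bool" where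
  "unital_cstar_subalgebra sc st B \<longleftrightarrow>
     1 \<in> B \<and> closed B \<and>
     (\<forall>a\<in>B. \<forall>b\<in>B. a + b \<in> B \<and> a * b \<in> B) \<and>
     (\<forall>c. \<forall>a\<in>B. sc c a \<in> B) \<and>
     (\<forall>a\<in>B. st a \<in> B)"

definition cstar_positive :: "('a::{real_normed_algebra_1,banach} \<Rightarrow> 'a) \<Rightarrow> 'a \<Rightarrow> bool" where
  "cstar_positive st x \<longleftrightarrow> (\<exists>c. x = st c * c)"

text \<open>Complete positivity of E : A \<rightarrow> B (Lance's formulation): for all n, a_1..a_n in A and
b_1..b_n in B, the element sum_{i,j} b_i* E(a_i* a_j) b_j is positive.\<close>
definition completely_positive ::
  "('a::{real_normed_algebra_1,banach} \<Rightarrow> 'a) \<Rightarrow> 'a set \<Rightarrow> ('a \<Rightarrow> 'a) \<Rightarrow> bool" where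
  "completely_positive st B E \<longleftrightarrow>
     (\<forall>(n::nat) (a::nat \<Rightarrow> 'a) (b::nat \<Rightarrow> 'a). (\<forall>i<n. b i \<in> B) \<longrightarrow>
        cstar_positive st (\<Sum>i<n. \<Sum>j<n. st (b i) * E (st (a i) * a j) * b j))"

definition op_cstar_prob_space ::
  "(complex \<Rightarrow> 'a::{real_normed_algebra_1,banach} \<Rightarrow> 'a) \<Rightarrow> ('a \<Rightarrow> 'a) \<Rightarrow> 'a set \<Rightarrow> ('a \<Rightarrow> 'a) \<Rightarrow> bool" where
  "op_cstar_prob_space sc st B E \<longleftrightarrow>
     unital_cstar_algebra sc st \<and> unital_cstar_subalgebra sc st B \<and>
     (\<forall>a b. E (a + b) = E a + E b) \<and>
     (\<forall>c a. E (sc c a) = sc c (E a)) \<and>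
     (\<forall>a. E a \<in> B) \<and>
     (\<forall>b\<in>B. E b = b) \<and>
     (\<forall>b1\<in>B. \<forall>b2\<in>B. \<forall>a. E (b1 * a * b2) = b1 * E a * b2) \<and>
     completely_positive st B E"

text \<open>The (possibly non-unital) B-bimodule subalgebra generated by S.\<close>
inductive_set bimod_subalg ::
  "(complex \<Rightarrow> 'a::{real_normed_algebra_1,banach} \<Rightarrow> 'a) \<Rightarrow> 'a set \<Rightarrow> 'a set \<Rightarrow> 'a set"
  for sc :: "complex \<Rightarrow> 'a \<Rightarrow> 'a" and B :: "'a set" and S :: "'a set" where
  gen: "s \<in> S \<Longrightarrow> s \<in> bimod_subalg sc B S"
| add: "a \<in> bimod_subalg sc B S \<Longrightarrow> a' \<in> bimod_subalg sc B S \<Longrightarrow> a + a' \<in> bimod_subalg sc B S"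
| mult: "a \<in> bimod_subalg sc B S \<Longrightarrow> a' \<in> bimod_subalg sc B S \<Longrightarrow> a * a' \<in> bimod_subalg sc B S"
| scal: "a \<in> bimod_subalg sc B S \<Longrightarrow> sc c a \<in> bimod_subalg sc B S"
| lmult: "b \<in> B \<Longrightarrow> a \<in> bimod_subalg sc B S \<Longrightarrow> b * a \<in> bimod_subalg sc B S"
| rmult: "b \<in> B \<Longrightarrow> a \<in> bimod_subalg sc B S \<Longrightarrow> a * b \<in> bimod_subalg sc B S"

text \<open>Monotone independence A1 \<prec> A2 \<prec> A3 over B (with respect to E). A word is given by a
list of indices ix (in {1,2,3}) and a list of elements as with as!k in the algebra number ix!k.\<close>
definition monotone_indep3 ::
  "('a::{real_normed_algebra_1,banach} \<Rightarrow> 'a) \<Rightarrow> 'a set \<Rightarrow> 'a set \<Rightarrow> 'a set \<Rightarrow> bool" where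
  "monotone_indep3 E A1 A2 A3 \<longleftrightarrow>
     (\<forall>(ix::nat list) (as::'a list) (j::nat).
        length ix = length as \<and>
        (\<forall>k<length as. ix ! k \<in> {1,2,3} \<and>
            as ! k \<in> (if ix ! k = 1 then A1 else if ix ! k = 2 then A2 else A3)) \<and>
        j < length as \<and>
        (0 < j \<longrightarrow> ix ! (j - 1) < ix ! j) \<and>
        (j + 1 < length as \<longrightarrow> ix ! (j + 1) < ix ! j)
        \<longrightarrow> E (prod_list as) = E (prod_list (as[j := E (as ! j)])))"

definition compositions :: "nat \<Rightarrow> nat \<Rightarrow> nat list set" where
  "compositions len s = {qs. length qs = len \<and> sum_list qs = s}"

fun alt_word :: "('a::monoid_mult \<Rightarrow> 'a) \<Rightarrow> 'a \<Rightarrow> 'a \<Rightarrow> nat list \<Rightarrow> 'a" where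
  "alt_word E x y [] = 1"
| "alt_word E x y [q] = E (y ^ q)"
| "alt_word E x y (q # q' # qs) = E (y ^ q) * x * alt_word E x y (q' # qs)"

end

theory Submission
  imports Defs
begin


lemma pow_split:
  "((x::'a::ring_1) + y) ^ n = y ^ n + (\<Sum>j<n. y ^ j * x * (x + y) ^ (n - 1 - j))"
proof (induct n)
  case 0 then show ?case by simp
next
  case (Suc n)
  have "(x+y)^Suc n = x*(x+y)^n + y*(x+y)^n" by (simp add: distrib_right)
  also have "y*(x+y)^n = y^Suc n + (\<Sum>j<n. y^Suc j * x * (x+y)^(n-1-j))"
    using Suc by (simp add: distrib_left sum_distrib_left mult.assoc)
  also have "(\<Sum>j<Suc n. y^j*x*(x+y)^(Suc n-1-j)) = x*(x+y)^n + (\<Sum>j<n. y^Suc j*x*(x+y)^(n-1-j))"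
    by (subst sum.lessThan_Suc_shift) simp
  ultimately show ?case by (simp add: algebra_simps)
qed

lemma comp_1: "compositions (Suc 0) s = {[s]}"
  by (auto simp: compositions_def length_Suc_conv)

lemma comp_Suc: "compositions (Suc k) s = (\<lambda>(q,qs). q#qs) ` (SIGMA q:{..s}. compositions k (s-q))"
  by (auto simp: compositions_def length_Suc_conv image_iff)

lemma finite_comp: "finite (compositions k s)"
proof (induct k arbitrary: s)
  case 0
  have "compositions 0 s \<subseteq> {[]}" by (auto simp: compositions_def)
  then show ?case using finite_subset by blast
next
  case (Suc k) then show ?case by (simp add: comp_Suc)
qed

lemma sum_comp_Suc:
  "(\<Sum>qs\<in>compositions (Suc k) s. f qs) = (\<Sum>q\<le>s. \<Sum>qs\<in>compositions k (s-q). f (q#qs))"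
proof -
  have inj: "inj_on (\<lambda>(q,qs). q#qs) (SIGMA q:{..s}. compositions k (s-q))"
    by (auto simp: inj_on_def)
  show ?thesis
    unfolding comp_Suc sum.reindex[OF inj] o_def
    by (simp add: sum.Sigma finite_comp split_def)
qed

lemma alt_cons: "qs \<noteq> [] \<Longrightarrow> alt_word E x y (q#qs) = E (y^q) * x * alt_word E x y qs"
  by (cases qs) auto

lemma tri_swap:
  "(\<Sum>k<n. \<Sum>q\<le>n-Suc k. F k q) = (\<Sum>q<n. \<Sum>k\<le>n-Suc q. F k (q::nat))"
proof -
  have "(\<Sum>k<n. \<Sum>q\<le>n-Suc k. F k q) = (\<Sum>k<n. \<Sum>q\<in>{q. q\<in>{..<n} \<and> k+q<n}. F k q)"
    by (rule sum.cong) (auto intro!: sum.cong)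
  also have "\<dots> = (\<Sum>q<n. \<Sum>k\<in>{k. k\<in>{..<n} \<and> k+q<n}. F k q)"
    by (rule sum.swap_restrict) auto
  also have "\<dots> = (\<Sum>q<n. \<Sum>k\<le>n-Suc q. F k q)"
    by (rule sum.cong) (auto intro!: sum.cong)
  finally show ?thesis .
qed

definition Sx :: "('a::ring_1 \<Rightarrow> 'a) \<Rightarrow> 'a \<Rightarrow> 'a \<Rightarrow> nat \<Rightarrow> 'a" where
  "Sx E x y n = (\<Sum>k\<in>{0..n}. \<Sum>qs\<in>compositions (k + 1) (n - k). alt_word E x y qs)"

lemma Sx_rec:
  "Sx E x y n = E (y^n) + (\<Sum>j<n. E (y^j) * x * Sx E x y (n - 1 - j))"
    for x y :: "'a::ring_1"
proof -
  have "Sx E x y n = (\<Sum>k\<le>n. \<Sum>qs\<in>compositions (k + 1) (n - k). alt_word E x y qs)"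
    by (simp add: Sx_def atLeast0AtMost)
  also have "\<dots> = E (y^n) + (\<Sum>k<n. \<Sum>qs\<in>compositions (Suc k + 1) (n - Suc k). alt_word E x y qs)"
    by (subst sum.atMost_shift) (simp add: comp_1)
  also have "(\<Sum>k<n. \<Sum>qs\<in>compositions (Suc k + 1) (n - Suc k). alt_word E x y qs)
     = (\<Sum>k<n. \<Sum>q\<le>n-Suc k. \<Sum>qs\<in>compositions (k+1) (n - Suc k - q). E (y^q) * x * alt_word E x y qs)"
  proof (rule sum.cong[OF refl])
    fix k
    show "(\<Sum>qs\<in>compositions (Suc k + 1) (n - Suc k). alt_word E x y qs)
     = (\<Sum>q\<le>n-Suc k. \<Sum>qs\<in>compositions (k+1) (n - Suc k - q). E (y^q) * x * alt_word E x y qs)"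
      unfolding add_Suc sum_comp_Suc
      by (intro sum.cong refl alt_cons) (auto simp: compositions_def)
  qed
  also have "\<dots> = (\<Sum>q<n. \<Sum>k\<le>n-Suc q. \<Sum>qs\<in>compositions (k+1) (n - Suc k - q). E (y^q) * x * alt_word E x y qs)"
    by (rule tri_swap)
  also have "\<dots> = (\<Sum>j<n. E (y^j) * x * Sx E x y (n - 1 - j))"
  proof -
    have e: "\<And>a b. n - Suc a - b = n - 1 - b - a" by simp
    show ?thesis unfolding Sx_def sum_distrib_left atLeast0AtMost e
      by (intro sum.cong refl) (simp add: mult.assoc)
  qed
  finally show ?thesis .
qed



locale mi =
  fixes E :: "'a::{real_normed_algebra_1,banach} \<Rightarrow> 'a" and B :: "'a set" and A :: "nat \<Rightarrow> 'a set"
  assumes E_add: "E (a + b) = E a + E b"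
    and E_in: "E a \<in> B"
    and E_id: "b \<in> B \<Longrightarrow> E b = b"
    and E_bimod: "b1 \<in> B \<Longrightarrow> b2 \<in> B \<Longrightarrow> E (b1 * a * b2) = b1 * E a * b2"
    and B1: "1 \<in> B" and Bmult: "b \<in> B \<Longrightarrow> b' \<in> B \<Longrightarrow> b * b' \<in> B"
    and Almult: "b \<in> B \<Longrightarrow> a \<in> A i \<Longrightarrow> b * a \<in> A i"
    and Armult: "b \<in> B \<Longrightarrow> a \<in> A i \<Longrightarrow> a * b \<in> A i"
    and Amult: "a \<in> A i \<Longrightarrow> a' \<in> A i \<Longrightarrow> a * a' \<in> A i"
    and mono: "monotone_indep3 E (A 1) (A 2) (A 3)"
begin

definition idx where "idx a = (if a \<in> A 1 then 1 else if a \<in> A 2 then 2 else (3::nat))"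
definition valid where "valid l \<longleftrightarrow> (\<forall>a\<in>set l. a \<in> A 1 \<union> A 2 \<union> A 3)"

inductive_set spn :: "('a list \<Rightarrow> bool) \<Rightarrow> 'a set" for P where
  zero: "0 \<in> spn P"
| word: "valid l \<Longrightarrow> P l \<Longrightarrow> prod_list l \<in> spn P"
| add: "X \<in> spn P \<Longrightarrow> Y \<in> spn P \<Longrightarrow> X + Y \<in> spn P"

abbreviation "Lsp i \<equiv> spn (\<lambda>l. l = [] \<or> idx (last l) < i)"
abbreviation "Rsp i \<equiv> spn (\<lambda>l. l = [] \<or> idx (hd l) < i)"
abbreviation "V \<equiv> spn (\<lambda>l. True)"

lemma E0: "E 0 = 0" using E_add[of 0 0] by simp

lemma E_sum: "E (sum f S) = (\<Sum>x\<in>S. E (f x))"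
  by (induct S rule: infinite_finite_induct) (auto simp: E0 E_add)

lemma E_lmult: "b \<in> B \<Longrightarrow> E (b * a) = b * E a"
  using E_bimod[of b 1 a] B1 by simp

lemma valid_rel:
  "valid l \<Longrightarrow> list_all2 (\<lambda>k e. k \<in> {1,2,3::nat} \<and> e \<in> (if k = 1 then A 1 else if k = 2 then A 2 else A 3)) (map idx l) l"
  by (induct l) (auto simp: valid_def idx_def)

lemma peak_list:
  assumes "valid l1" "valid l2" "a \<in> A i" "i \<in> {1,2,3}"
    "l1 = [] \<or> idx (last l1) < i" "l2 = [] \<or> idx (hd l2) < i"
  shows "E (prod_list l1 * a * prod_list l2) = E (prod_list l1 * E a * prod_list l2)"
proof -
  let ?as = "l1 @ a # l2" and ?ix = "map idx l1 @ i # map idx l2"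
  let ?Q = "\<lambda>k e. k \<in> {1,2,3::nat} \<and> e \<in> (if k = 1 then A 1 else if k = 2 then A 2 else A 3)"
  have q: "list_all2 ?Q ?ix ?as"
    using valid_rel[OF assms(1)] valid_rel[OF assms(2)] assms(3,4)
    by (intro list_all2_appendI list_all2_Cons) auto
  have c1: "0 < length l1 \<longrightarrow> ?ix ! (length l1 - 1) < ?ix ! length l1"
    using assms(5) by (auto simp: nth_append last_conv_nth)
  have c2: "length l1 + 1 < length ?as \<longrightarrow> ?ix ! (length l1 + 1) < ?ix ! length l1"
    using assms(6) by (auto simp: nth_append hd_conv_nth)
  have "E (prod_list ?as) = E (prod_list (?as[length l1 := E (?as ! length l1)]))"
  proof -
    have H: "\<forall>k<length ?as. ?Q (?ix!k) (?as!k)" using q by (simp add: list_all2_conv_all_nth)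
    have L: "length ?ix = length ?as" using q list_all2_lengthD by blast
    have J: "length l1 < length ?as" by simp
    show ?thesis
      using mono[unfolded monotone_indep3_def, rule_format, OF conjI[OF L conjI[OF H conjI[OF J conjI[OF c1 c2]]]]] .
  qed
  then show ?thesis by (simp add: list_update_append mult.assoc)
qed

lemma peak:
  assumes "U \<in> Lsp i" "W \<in> Rsp i" "a \<in> A i" "i \<in> {1,2,3}"
  shows "E (U * a * W) = E (U * E a * W)"
  using assms(1)
proof induct
  case zero then show ?case by (simp add: E0)
next
  case (word l1)
  note w1 = word
  from assms(2) show ?case
  proof induct
    case zero then show ?case by (simp add: E0)
  next
    case (word l2) show ?case by (rule peak_list) (use w1 word assms in auto)
  next
    case (add X Y) then show ?case by (simp add: distrib_left E_add)
  qed
next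
  case (add X Y) then show ?case by (simp add: distrib_right E_add)
qed

lemma spn_sum: "(\<And>x. x \<in> S \<Longrightarrow> f x \<in> spn P) \<Longrightarrow> sum f S \<in> spn P"
  by (induct S rule: infinite_finite_induct) (simp_all add: spn.zero spn.add)

lemma spn_V: "X \<in> spn P \<Longrightarrow> X \<in> V"
  by (induct rule: spn.induct) (simp_all add: spn.zero spn.add spn.word)

lemma V_mult: "X \<in> V \<Longrightarrow> Y \<in> V \<Longrightarrow> X * Y \<in> V"
proof (induct X rule: spn.induct)
  case zero then show ?case by (simp add: spn.zero)
next
  case (word l1)
  from word(3) show ?case
  proof (induct Y rule: spn.induct)
    case zero then show ?case by (simp add: spn.zero)
  next
    case (word l2)
    have "prod_list (l1 @ l2) \<in> V" using word \<open>valid l1\<close> by (intro spn.word) (auto simp: valid_def)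
    then show ?case by simp
  next
    case (add X Y) then show ?case by (simp add: distrib_left spn.add)
  qed
next
  case (add X Y) then show ?case by (simp add: distrib_right spn.add)
qed

lemma one_spn: "1 \<in> spn (\<lambda>l. l = [] \<or> Q l)"
  using spn.word[of "[]" "\<lambda>l. l = [] \<or> Q l"] by (simp add: valid_def)

lemma gen_V: "a \<in> A k \<Longrightarrow> k \<in> {1,2,3} \<Longrightarrow> a \<in> V"
  using spn.word[of "[a]" "\<lambda>l. True"] by (auto simp: valid_def)

lemma idx_le: "a \<in> A k \<Longrightarrow> k \<in> {1,2,3} \<Longrightarrow> idx a \<le> k"
  by (auto simp: idx_def)

lemma L_snoc: "X \<in> spn P \<Longrightarrow> a \<in> A k \<Longrightarrow> k \<in> {1,2,3} \<Longrightarrow> k < i \<Longrightarrow> X * a \<in> Lsp i"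
proof (induct X rule: spn.induct)
  case zero then show ?case by (simp add: spn.zero)
next
  case (word l)
  have "prod_list (l @ [a]) \<in> Lsp i" using word idx_le[of a k]
    by (intro spn.word) (auto simp: valid_def)
  then show ?case by simp
next
  case (add X Y) then show ?case by (simp add: distrib_right spn.add)
qed

lemma R_cons: "X \<in> spn P \<Longrightarrow> a \<in> A k \<Longrightarrow> k \<in> {1,2,3} \<Longrightarrow> k < i \<Longrightarrow> a * X \<in> Rsp i"
proof (induct X rule: spn.induct)
  case zero then show ?case by (simp add: spn.zero)
next
  case (word l)
  have "prod_list (a # l) \<in> Rsp i" using word idx_le[of a k]
    by (intro spn.word) (auto simp: valid_def)
  then show ?case by simp
next
  case (add X Y) then show ?case by (simp add: distrib_left spn.add)
qed

lemma L_cons: "X \<in> Lsp i \<Longrightarrow> a \<in> A k \<Longrightarrow> k \<in> {1,2,3} \<Longrightarrow> k < i \<Longrightarrow> a * X \<in> Lsp i"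
proof (induct X rule: spn.induct)
  case zero then show ?case by (simp add: spn.zero)
next
  case (word l)
  have "prod_list (a # l) \<in> Lsp i" using word idx_le[of a k]
    by (intro spn.word) (auto simp: valid_def)
  then show ?case by simp
next
  case (add X Y) then show ?case by (simp add: distrib_left spn.add)
qed

lemma pow_A: "y \<in> A k \<Longrightarrow> 0 < j \<Longrightarrow> y ^ j \<in> A k"
proof (induct j)
  case 0 then show ?case by simp
next
  case (Suc j) show ?case
  proof (cases j)
    case 0 then show ?thesis using Suc by simp
  next
    case (Suc j') then show ?thesis using Amult[of y k "y^j"] \<open>y \<in> A k\<close> Suc.hyps by simp
  qed
qed

lemma pow_V: "X \<in> V \<Longrightarrow> X ^ j \<in> V"
proof (induct j)
  case 0 show ?case using one_spn[where Q="\<lambda>_. True"] by simp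
next
  case (Suc j) then show ?case using V_mult[of X "X^j"] by simp
qed

end



context mi
begin

lemma G:
  assumes x: "x \<in> A 1" and y: "y \<in> A 3" and Z: "Z \<in> Rsp 3"
  shows "U \<in> Lsp 3 \<Longrightarrow> b \<in> B \<Longrightarrow> E (U * b * (x+y)^n * Z) = E (U * b * Sx E x y n * Z)"
proof (induction n arbitrary: U b rule: less_induct)
  case (less n)
  have ZV: "Z \<in> V" using Z spn_V by blast
  have "x + y \<in> V" using gen_V[OF x] gen_V[OF y] spn.add by simp
  then have xyV: "(x+y)^k \<in> V" for k using pow_V by blast
  have t1: "E (U * b * y^n * Z) = E (U * b * E (y^n) * Z)"
  proof (cases "n = 0")
    case True then show ?thesis using E_id B1 by simp
  next
    case False
    have a: "b * y^n \<in> A 3" using Almult less.prems(2) pow_A[OF y] False by simp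
    have "E (U * (b * y^n) * Z) = E (U * E (b*y^n) * Z)" by (rule peak[OF less.prems(1) Z a]) simp
    then show ?thesis by (simp add: E_lmult less.prems mult.assoc)
  qed
  have t2: "E (U * b * (y^j * x * (x+y)^(n-1-j)) * Z) = E (U * b * (E (y^j) * x * Sx E x y (n-1-j)) * Z)"
    if j: "j < n" for j
  proof -
    let ?k = "n-1-j"
    have W: "x * ((x+y)^?k * Z) \<in> Rsp 3" by (rule R_cons[OF V_mult[OF xyV ZV] x]) simp_all
    have s1: "E (U * b * (y^j * x * (x+y)^?k) * Z) = E (U * (b * E (y^j)) * (x * ((x+y)^?k * Z)))"
    proof (cases "j = 0")
      case True then show ?thesis using E_id B1 by (simp add: mult.assoc)
    next
      case False
      have a: "b * y^j \<in> A 3" using Almult less.prems(2) pow_A[OF y] False by simp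
      have "E (U * (b * y^j) * (x * ((x+y)^?k * Z))) = E (U * E (b*y^j) * (x * ((x+y)^?k * Z)))"
        by (rule peak[OF less.prems(1) W a]) simp
      then show ?thesis by (simp add: E_lmult less.prems mult.assoc)
    qed
    have bx: "b * E (y^j) * x \<in> A 1" using Almult[OF Bmult[OF less.prems(2) E_in] x] .
    have U': "U * (b * E (y^j) * x) \<in> Lsp 3" by (rule L_snoc[OF less.prems(1) bx]) simp_all
    have IH: "E (U * (b * E (y^j) * x) * 1 * (x+y)^?k * Z) = E (U * (b * E (y^j) * x) * 1 * Sx E x y ?k * Z)"
      by (rule less.IH[OF _ U' B1]) (use j in simp)
    show ?thesis using s1 IH by (simp add: mult.assoc)
  qed
  have "E (U * b * (x+y)^n * Z) = E (U*b*y^n*Z) + (\<Sum>j<n. E (U * b * (y^j * x * (x+y)^(n-1-j)) * Z))"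
    by (subst pow_split) (simp add: distrib_left distrib_right sum_distrib_left sum_distrib_right E_add E_sum)
  also have "\<dots> = E (U*b*E (y^n)*Z) + (\<Sum>j<n. E (U * b * (E (y^j) * x * Sx E x y (n-1-j)) * Z))"
    using t1 t2 by simp
  also have "\<dots> = E (U * b * Sx E x y n * Z)"
    by (simp only: Sx_rec[of E x y n]) (simp add: distrib_left distrib_right sum_distrib_left sum_distrib_right E_add E_sum)
  finally show ?case .
qed

lemma alt_L0: "x \<in> A 1 \<Longrightarrow> \<exists>U b. U \<in> Lsp 2 \<and> b \<in> B \<and> alt_word E x y (q # qs) = U * b"
proof (induct qs arbitrary: q)
  case Nil
  show ?case using one_spn[where Q="\<lambda>l. idx (last l) < 2"] E_in by fastforce
next
  case (Cons q' qs)
  then obtain U b where U: "U \<in> Lsp 2" "b \<in> B" "alt_word E x y (q' # qs) = U * b" by blast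
  have ex: "E (y^q) * x \<in> A 1" using Almult[OF E_in Cons(2)] .
  have "E (y^q) * x * U \<in> Lsp 2" by (rule L_cons[OF U(1) ex]) simp_all
  moreover have "alt_word E x y (q # q' # qs) = (E (y^q) * x * U) * b" using U(3) by (simp add: mult.assoc)
  ultimately show ?case using U(2) by blast
qed

lemma alt_L: "qs \<noteq> [] \<Longrightarrow> x \<in> A 1 \<Longrightarrow> \<exists>U b. U \<in> Lsp 2 \<and> b \<in> B \<and> alt_word E x y qs = U * b"
  using alt_L0 by (cases qs) auto

lemma alt_R0: "x \<in> A 1 \<Longrightarrow> \<exists>b W. b \<in> B \<and> W \<in> Rsp 2 \<and> alt_word E x y (q # qs) = b * W"
proof (induct qs arbitrary: q)
  case Nil
  show ?case using one_spn[where Q="\<lambda>l. idx (hd l) < 2"] E_in by fastforce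
next
  case (Cons q' qs)
  then obtain b W where W: "b \<in> B" "W \<in> Rsp 2" "alt_word E x y (q' # qs) = b * W" by blast
  have ex: "x * b \<in> A 1" using Armult[OF W(1) Cons(2)] .
  have "x * b * W \<in> Rsp 2" by (rule R_cons[OF W(2) ex]) simp_all
  moreover have "alt_word E x y (q # q' # qs) = E (y^q) * (x * b * W)" using W(3) by (simp add: mult.assoc)
  ultimately show ?case using E_in by blast
qed

lemma alt_R: "qs \<noteq> [] \<Longrightarrow> x \<in> A 1 \<Longrightarrow> \<exists>b W. b \<in> B \<and> W \<in> Rsp 2 \<and> alt_word E x y qs = b * W"
  using alt_R0 by (cases qs) auto

lemma main:
  assumes x1: "x1 \<in> A 1" and x2: "x2 \<in> A 1" and w: "w \<in> A 2" and y1: "y1 \<in> A 3" and y2: "y2 \<in> A 3"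
  shows "E ((x1 + y1) ^ n * w * (x2 + y2) ^ m) =
    (\<Sum>k\<in>{0..n}. \<Sum>l\<in>{0..m}. \<Sum>qs\<in>compositions (k + 1) (n - k). \<Sum>ps\<in>compositions (l + 1) (m - l).
       E (alt_word E x1 y1 qs * E w * alt_word E x2 y2 ps))"
proof -
  have "x2 + y2 \<in> V" using gen_V[OF x2] gen_V[OF y2] spn.add by simp
  then have x2y2V: "(x2+y2)^m \<in> V" using pow_V by blast
  have Z1: "w * (x2+y2)^m \<in> Rsp 3" by (rule R_cons[OF x2y2V w]) simp_all
  have one1: "1 \<in> Lsp 3" using one_spn[where Q="\<lambda>l. idx (last l) < 3"] by simp
  have one2: "1 \<in> Rsp 3" using one_spn[where Q="\<lambda>l. idx (hd l) < 3"] by simp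
  have s1: "E ((x1+y1)^n * w * (x2+y2)^m) = E (Sx E x1 y1 n * w * (x2+y2)^m)"
    using G[OF x1 y1 Z1 one1 B1, of n] by (simp add: mult.assoc)
  have altw: "alt_word E x1 y1 qs * w \<in> Lsp 3" if ne: "qs \<noteq> []" for qs
  proof -
    obtain U b where U: "U \<in> Lsp 2" "b \<in> B" "alt_word E x1 y1 qs = U * b" using alt_L[OF ne x1] by blast
    have "U * (b * w) \<in> Lsp 3" by (rule L_snoc[OF U(1) Almult[OF U(2) w]]) simp_all
    then show ?thesis using U(3) by (simp add: mult.assoc)
  qed
  have Uw: "Sx E x1 y1 n * w \<in> Lsp 3" unfolding Sx_def sum_distrib_right
    by (intro spn_sum altw) (auto simp: compositions_def)
  have s2: "E (Sx E x1 y1 n * w * (x2+y2)^m) = E (Sx E x1 y1 n * w * Sx E x2 y2 m)"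
    using G[OF x2 y2 one2 Uw B1, of m] by simp
  have s3: "E (alt_word E x1 y1 qs * w * alt_word E x2 y2 ps) = E (alt_word E x1 y1 qs * E w * alt_word E x2 y2 ps)"
    if ne: "qs \<noteq> []" "ps \<noteq> []" for qs ps
  proof -
    obtain U b where U: "U \<in> Lsp 2" "b \<in> B" "alt_word E x1 y1 qs = U * b" using alt_L[OF ne(1) x1] by blast
    obtain b' W where W: "b' \<in> B" "W \<in> Rsp 2" "alt_word E x2 y2 ps = b' * W" using alt_R[OF ne(2) x2] by blast
    have a: "b * w * b' \<in> A 2" using Armult[OF W(1) Almult[OF U(2) w]] .
    have "E (U * (b * w * b') * W) = E (U * E (b * w * b') * W)" by (rule peak[OF U(1) W(2) a]) simp
    then show ?thesis using U W E_bimod[OF U(2) W(1), of w] by (simp add: mult.assoc)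
  qed
  have "E (Sx E x1 y1 n * w * Sx E x2 y2 m) = (\<Sum>k\<in>{0..n}. \<Sum>qs\<in>compositions (k + 1) (n - k). \<Sum>l\<in>{0..m}. \<Sum>ps\<in>compositions (l + 1) (m - l).
       E (alt_word E x1 y1 qs * w * alt_word E x2 y2 ps))"
  proof -
    have "Sx E x1 y1 n * w * Sx E x2 y2 m = (\<Sum>k\<in>{0..n}. \<Sum>qs\<in>compositions (k + 1) (n - k). alt_word E x1 y1 qs * w * Sx E x2 y2 m)"
      unfolding Sx_def[of E x1 y1 n] by (simp add: sum_distrib_right)
    also have "\<dots> = (\<Sum>k\<in>{0..n}. \<Sum>qs\<in>compositions (k + 1) (n - k). \<Sum>l\<in>{0..m}. \<Sum>ps\<in>compositions (l + 1) (m - l).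
       alt_word E x1 y1 qs * w * alt_word E x2 y2 ps)"
      unfolding Sx_def by (simp add: sum_distrib_left)
    finally show ?thesis by (simp only: E_sum)
  qed
  also have "\<dots> = (\<Sum>k\<in>{0..n}. \<Sum>qs\<in>compositions (k + 1) (n - k). \<Sum>l\<in>{0..m}. \<Sum>ps\<in>compositions (l + 1) (m - l).
       E (alt_word E x1 y1 qs * E w * alt_word E x2 y2 ps))"
    by (intro sum.cong refl s3) (auto simp: compositions_def)
  also have "\<dots> = (\<Sum>k\<in>{0..n}. \<Sum>l\<in>{0..m}. \<Sum>qs\<in>compositions (k + 1) (n - k). \<Sum>ps\<in>compositions (l + 1) (m - l).
       E (alt_word E x1 y1 qs * E w * alt_word E x2 y2 ps))"
    by (rule sum.cong[OF refl]) (rule sum.swap)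
  finally show ?thesis using s1 s2 by simp
qed

end


theorem lemma3p3:
  fixes sc :: "complex \<Rightarrow> 'a::{real_normed_algebra_1,banach} \<Rightarrow> 'a"
    and st :: "'a \<Rightarrow> 'a" and B :: "'a set" and E :: "'a \<Rightarrow> 'a"
    and x1 x2 y1 y2 w :: 'a and n m :: nat
  assumes "op_cstar_prob_space sc st B E"
    and "st x1 = x1" and "st x2 = x2" and "st y1 = y1" and "st y2 = y2" and "st w = w"
    and "monotone_indep3 E (bimod_subalg sc B {x1, x2}) (bimod_subalg sc B {w})
           (bimod_subalg sc B {y1, y2})"
  shows "E ((x1 + y1) ^ n * w * (x2 + y2) ^ m) =
    (\<Sum>k\<in>{0..n}. \<Sum>l\<in>{0..m}. \<Sum>qs\<in>compositions (k + 1) (n - k). \<Sum>ps\<in>compositions (l + 1) (m - l).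
       E (alt_word E x1 y1 qs * E w * alt_word E x2 y2 ps))"
proof -
  define A where "A = (\<lambda>i::nat. if i = 1 then bimod_subalg sc B {x1,x2} else if i = 2 then bimod_subalg sc B {w}
     else bimod_subalg sc B {y1,y2})"
  interpret M: mi E B A
    using assms(1,7) unfolding op_cstar_prob_space_def unital_cstar_subalgebra_def mi_def A_def
    by (auto intro: bimod_subalg.intros)
  have x1: "x1 \<in> A 1" and x2: "x2 \<in> A 1" and w: "w \<in> A 2" and y1: "y1 \<in> A 3" and y2: "y2 \<in> A 3"
    unfolding A_def by (auto intro: bimod_subalg.gen)
  show ?thesis by (rule M.main[OF x1 x2 w y1 y2])
qed

end
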